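(* Let $\mathcal{SB}=\langle\mathcal{L},A,\to,\text{supp}\rangle$ be an SBAF and $S\subseteq Sent(A)$ a compatible set of sentences. Then $Arg_w(S)$ is admissible.
   Context: A language is a triple $\mathcal{L}=\langle L,\overline{\cdot},n\rangle$: $L$ is a nonempty set of sentences; $\overline{\cdot}$ assigns to each $s\in L$ a set $\overline{s}\subseteq L$ of sentences incompatible with $s$, and is symmetric; $n$ is a partial naming function assigning to an argument $a$ a sentence $n(a)\in L$ (if undefined, put $\overline{n(a)}:=\emptyset$), with $\overline{n(\langle\{t\},t\rangle)}=\emptyset$. An argument is a pair $a=\langle Prem(a),Conc(a)\rangle$ with $Prem(a)$ a nonempty finite subset of $L$ and $Conc(a)\in L$; $Sent(a):=Prem(a)\cup\{Conc(a)\}$, $Sent(E):=\bigcup_{a\in E}Sent(a)$. Argument $a$ attacks $b$ ($a\to b$) if $Conc(a)\in\overline{s}$ for some $s\in Sent(b)$ or $Conc(a)\in\overline{n(b)}$. An SBAF is $\langle\mathcal{L},A,\to,\text{supp}\rangle$ with $A$ a finite set of arguments. For $E\subseteq A$: $E$ defends $a\in A$ if for every $b\in A$ with $b\to a$ some element of $E$ attacks $b$; $E$ is conflict-free if no $a,b\in E$ with $a\to b$; admissible if conflict-free and defends all its elements. $S$ is compatible if no $s,t\in S$ with $s\in\overline t$. $Arg_s(S):=\{a\in A\mid Prem(a)\subseteq S\text{ and }\overline{n(a)}\cap S=\emptyset\}$; $R^S(E):=\{a\in A\mid a\in Arg_s(S)\text{ and }E\text{ defends }a\}$. For compatible $S$,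 $Init(S)$ is the largest admissible subset of $\{a\in A\mid Sent(a)\subseteq S\text{ and }\overline{n(a)}\cap S=\emptyset\}$, and the weak argument set $Arg_w(S)$ is the $\subseteq$-least set $E\subseteq A$ with $Init(S)\subseteq E$ and $R^S(E)=E$. *)

theory Defs
  imports Main
begin

text \<open>A language is given by a carrier L, the incompatibility map ov (s \<mapsto> \<bar>s\<bar>),
  and a partial naming function nm (None = undefined).\<close>

type_synonym 's argument = "'s set \<times> 's"

definition Prem :: "'s argument \<Rightarrow> 's set" where "Prem a = fst a"
definition Conc :: "'s argument \<Rightarrow> 's" where "Conc a = snd a"
definition Sent :: "'s argument \<Rightarrow> 's set" where "Sent a = Prem a \<union> {Conc a}"
definition SentS :: "'s argument set \<Rightarrow> 's set" where "SentS E = (\<Union>a\<in>E. Sent a)"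

definition nov :: "('s \<Rightarrow> 's set) \<Rightarrow> ('s argument \<Rightarrow> 's option) \<Rightarrow> 's argument \<Rightarrow> 's set" where
  "nov ov nm a = (case nm a of None \<Rightarrow> {} | Some s \<Rightarrow> ov s)"

definition language :: "'s set \<Rightarrow> ('s \<Rightarrow> 's set) \<Rightarrow> ('s argument \<Rightarrow> 's option) \<Rightarrow> bool" where
  "language L ov nm \<longleftrightarrow>
     L \<noteq> {} \<and>
     (\<forall>s\<in>L. ov s \<subseteq> L) \<and>
     (\<forall>s\<in>L. \<forall>t\<in>L. s \<in> ov t \<longleftrightarrow> t \<in> ov s) \<and>
     (\<forall>a s. nm a = Some s \<longrightarrow> s \<in> L) \<and>
     (\<forall>t\<in>L. nov ov nm ({t}, t) = {})"

definition is_argument :: "'s set \<Rightarrow> 's argument \<Rightarrow> bool" where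
  "is_argument L a \<longleftrightarrow> Prem a \<noteq> {} \<and> finite (Prem a) \<and> Prem a \<subseteq> L \<and> Conc a \<in> L"

definition attacks :: "('s \<Rightarrow> 's set) \<Rightarrow> ('s argument \<Rightarrow> 's option) \<Rightarrow> 's argument \<Rightarrow> 's argument \<Rightarrow> bool" where
  "attacks ov nm a b \<longleftrightarrow> (\<exists>s\<in>Sent b. Conc a \<in> ov s) \<or> Conc a \<in> nov ov nm b"

text \<open>An SBAF (the support relation plays no role in the notions below and is omitted).\<close>
definition sbaf :: "'s set \<Rightarrow> ('s \<Rightarrow> 's set) \<Rightarrow> ('s argument \<Rightarrow> 's option) \<Rightarrow> 's argument set \<Rightarrow> bool" where
  "sbaf L ov nm A \<longleftrightarrow> language L ov nm \<and> finite A \<and> (\<forall>a\<in>A. is_argument L a)"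

definition defends where
  "defends ov nm A E a \<longleftrightarrow> (\<forall>b\<in>A. attacks ov nm b a \<longrightarrow> (\<exists>c\<in>E. attacks ov nm c b))"

definition conflict_free where
  "conflict_free ov nm E \<longleftrightarrow> \<not> (\<exists>a\<in>E. \<exists>b\<in>E. attacks ov nm a b)"

definition admissible where
  "admissible ov nm A E \<longleftrightarrow> E \<subseteq> A \<and> conflict_free ov nm E \<and> (\<forall>a\<in>E. defends ov nm A E a)"

definition compatible :: "('s \<Rightarrow> 's set) \<Rightarrow> 's set \<Rightarrow> bool" where
  "compatible ov S \<longleftrightarrow> \<not> (\<exists>s\<in>S. \<exists>t\<in>S. s \<in> ov t)"

definition Arg_s where
  "Arg_s ov nm A S = {a\<in>A. Prem a \<subseteq> S \<and> nov ov nm a \<inter> S = {}}"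

definition R_S where
  "R_S ov nm A S E = {a\<in>A. a \<in> Arg_s ov nm A S \<and> defends ov nm A E a}"

definition Init_cands where
  "Init_cands ov nm A S = {a\<in>A. Sent a \<subseteq> S \<and> nov ov nm a \<inter> S = {}}"

definition Init where
  "Init ov nm A S = (THE E. E \<subseteq> Init_cands ov nm A S \<and> admissible ov nm A E \<and>
      (\<forall>E'. E' \<subseteq> Init_cands ov nm A S \<and> admissible ov nm A E' \<longrightarrow> E' \<subseteq> E))"

definition Arg_w where
  "Arg_w ov nm A S = (THE E. E \<subseteq> A \<and> Init ov nm A S \<subseteq> E \<and> R_S ov nm A S E = E \<and>
      (\<forall>E'. E' \<subseteq> A \<and> Init ov nm A S \<subseteq> E' \<and> R_S ov nm A S E' = E' \<longrightarrow> E \<subseteq> E'))"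

end

theory Submission
  imports Defs
begin

lemma defends_mono: "defends ov nm A E a \<Longrightarrow> E \<subseteq> E' \<Longrightarrow> defends ov nm A E' a"
  unfolding defends_def by blast

lemma R_mono: "E \<subseteq> E' \<Longrightarrow> R_S ov nm A S E \<subseteq> R_S ov nm A S E'"
  unfolding R_S_def using defends_mono by blast

lemma R_sub: "R_S ov nm A S E \<subseteq> A"
  unfolding R_S_def by blast

lemma R_adm:
  assumes "admissible ov nm A E" "E \<subseteq> R_S ov nm A S E"
  shows "admissible ov nm A (R_S ov nm A S E)"
proof -
  have cf: "conflict_free ov nm (R_S ov nm A S E)"
    unfolding conflict_free_def
  proof (intro notI, elim bexE)
    fix a b assume a: "a \<in> R_S ov nm A S E" and b: "b \<in> R_S ov nm A S E"
      and ab: "attacks ov nm a b"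
    from b have "defends ov nm A E b" unfolding R_S_def by blast
    moreover have "a \<in> A" using a unfolding R_S_def by blast
    ultimately obtain c where c: "c \<in> E" "attacks ov nm c a" using ab unfolding defends_def by blast
    from a have "defends ov nm A E a" unfolding R_S_def by blast
    moreover have "c \<in> A" using c assms(1) unfolding admissible_def by blast
    ultimately obtain d where "d \<in> E" "attacks ov nm d c" using c unfolding defends_def by blast
    thus False using c assms(1) unfolding admissible_def conflict_free_def by blast
  qed
  have "\<forall>a\<in>R_S ov nm A S E. defends ov nm A (R_S ov nm A S E) a"
    using assms(2) defends_mono unfolding R_S_def by blast
  thus ?thesis using cf R_sub unfolding admissible_def by blast
qed

lemma Init_props:
  assumes "compatible ov S"
  shows "Init ov nm A S \<subseteq> Init_cands ov nm A S \<and> admissible ov nm A (Init ov nm A S)"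
proof -
  define C where "C = Init_cands ov nm A S"
  define U where "U = \<Union>{E. E \<subseteq> C \<and> admissible ov nm A E}"
  have UC: "U \<subseteq> C" unfolding U_def by blast
  have cfC: "conflict_free ov nm C"
    unfolding conflict_free_def
  proof (intro notI, elim bexE)
    fix a b assume a: "a \<in> C" and b: "b \<in> C" and ab: "attacks ov nm a b"
    have ca: "Conc a \<in> S" using a unfolding C_def Init_cands_def Sent_def by blast
    show False
    proof (cases "\<exists>s\<in>Sent b. Conc a \<in> ov s")
      case True
      then obtain s where "s \<in> Sent b" "Conc a \<in> ov s" by blast
      moreover have "Sent b \<subseteq> S" using b unfolding C_def Init_cands_def by blast
      ultimately show False using ca assms unfolding compatible_def by blast
    next
      case False
      hence "Conc a \<in> nov ov nm b" using ab unfolding attacks_def by blast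
      thus False using ca b unfolding C_def Init_cands_def by blast
    qed
  qed
  have Uadm: "admissible ov nm A U"
  proof -
    have "U \<subseteq> A" unfolding U_def admissible_def by blast
    moreover have "conflict_free ov nm U" using cfC UC unfolding conflict_free_def by blast
    moreover have "\<forall>a\<in>U. defends ov nm A U a"
    proof
      fix a assume "a \<in> U"
      then obtain E where E: "E \<subseteq> C" "admissible ov nm A E" "a \<in> E" unfolding U_def by blast
      hence "E \<subseteq> U" unfolding U_def by blast
      thus "defends ov nm A U a" using E defends_mono unfolding admissible_def by blast
    qed
    ultimately show ?thesis unfolding admissible_def by blast
  qed
  have "Init ov nm A S = U"
    unfolding Init_def C_def[symmetric]
  proof (rule the_equality)
    show "U \<subseteq> C \<and> admissible ov nm A U \<and> (\<forall>E'. E' \<subseteq> C \<and> admissible ov nm A E' \<longrightarrow> E' \<subseteq> U)"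
      using UC Uadm unfolding U_def by blast
  next
    fix E assume "E \<subseteq> C \<and> admissible ov nm A E \<and> (\<forall>E'. E' \<subseteq> C \<and> admissible ov nm A E' \<longrightarrow> E' \<subseteq> E)"
    thus "E = U" using UC Uadm unfolding U_def by blast
  qed
  thus ?thesis using UC Uadm C_def by simp
qed

lemma chain_stab:
  fixes X :: "nat \<Rightarrow> 'a set"
  assumes "finite A" "\<And>k. X k \<subseteq> A" "\<And>k. X k \<subseteq> X (Suc k)"
  shows "\<exists>k. X (Suc k) = X k"
proof (rule ccontr)
  assume "\<not> ?thesis"
  hence ne: "\<And>k. X k \<subset> X (Suc k)" using assms(3) by blast
  have "\<And>k. k \<le> card (X k)"
  proof -
    fix k show "k \<le> card (X k)"
    proof (induction k)
      case (Suc k)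
      have "finite (X (Suc k))" using assms(1,2) finite_subset by blast
      hence "card (X k) < card (X (Suc k))" using ne psubset_card_mono by blast
      thus ?case using Suc by simp
    qed simp
  qed
  moreover have "card (X (Suc (card A))) \<le> card A" using assms(1,2) card_mono by blast
  ultimately show False by (metis Suc_n_not_le_n le_trans)
qed

theorem mainTheorem8:
  fixes L :: "'s set" and ov :: "'s \<Rightarrow> 's set" and nm :: "'s argument \<Rightarrow> 's option"
    and A :: "'s argument set" and S :: "'s set"
  assumes "sbaf L ov nm A"
    and "S \<subseteq> SentS A"
    and "compatible ov S"
  shows "admissible ov nm A (Arg_w ov nm A S)"
proof -
  define R where "R = R_S ov nm A S"
  define I where "I = Init ov nm A S"
  define X where "X = (\<lambda>k. (R ^^ k) I)"
  have fin: "finite A" using assms(1) unfolding sbaf_def by blast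
  have Ip: "I \<subseteq> Init_cands ov nm A S" "admissible ov nm A I"
    using Init_props[OF assms(3)] I_def by auto
  have IR: "I \<subseteq> R I"
  proof
    fix a assume a: "a \<in> I"
    hence "a \<in> Arg_s ov nm A S" using Ip(1) unfolding Init_cands_def Arg_s_def Sent_def by blast
    moreover have "defends ov nm A I a" using a Ip(2) unfolding admissible_def by blast
    moreover have "a \<in> A" using a Ip(2) unfolding admissible_def by blast
    ultimately show "a \<in> R I" unfolding R_def R_S_def by blast
  qed
  have inv: "admissible ov nm A (X k) \<and> X k \<subseteq> X (Suc k)" for k
  proof (induction k)
    case 0
    show ?case using Ip IR unfolding X_def by simp
  next
    case (Suc k)
    have "admissible ov nm A (X (Suc k))"
      using R_adm[of ov nm A "X k" S] Suc unfolding X_def R_def by simp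
    moreover have "X (Suc k) \<subseteq> X (Suc (Suc k))"
      using R_mono[of "X k" "X (Suc k)" ov nm A S] Suc unfolding X_def R_def by simp
    ultimately show ?case by blast
  qed
  have XA: "X k \<subseteq> A" for k using inv[of k] unfolding admissible_def by blast
  have XS: "X j \<subseteq> X (Suc j)" for j using inv[of j] by blast
  have "\<exists>k. X (Suc k) = X k" by (rule chain_stab[where X=X, OF fin XA XS])
  then obtain k where k: "X (Suc k) = X k" by blast
  define F where "F = X k"
  have RF: "R F = F" using k unfolding F_def X_def by simp
  have IX: "I \<subseteq> X j" for j
  proof (induction j)
    case 0 show ?case unfolding X_def by simp
  next
    case (Suc j) thus ?case using inv[of j] by blast
  qed
  have least: "X j \<subseteq> E" if "I \<subseteq> E" "R E = E" for E j
  proof (induction j)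
    case 0 thus ?case using that unfolding X_def by simp
  next
    case (Suc j)
    have "R (X j) \<subseteq> R E" using R_mono[OF Suc] unfolding R_def by blast
    thus ?case using that unfolding X_def by simp
  qed
  have FA: "F \<subseteq> A" using XA unfolding F_def by blast
  have IF: "I \<subseteq> F" using IX unfolding F_def by blast
  have lF: "\<forall>E'. E' \<subseteq> A \<and> I \<subseteq> E' \<and> R E' = E' \<longrightarrow> F \<subseteq> E'"
    unfolding F_def using least by simp
  have "Arg_w ov nm A S = F"
    unfolding Arg_w_def R_def[symmetric] I_def[symmetric]
  proof (rule the_equality)
    show "F \<subseteq> A \<and> I \<subseteq> F \<and> R F = F \<and> (\<forall>E'. E' \<subseteq> A \<and> I \<subseteq> E' \<and> R E' = E' \<longrightarrow> F \<subseteq> E')"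
      using FA IF RF lF by simp
  next
    fix E assume E: "E \<subseteq> A \<and> I \<subseteq> E \<and> R E = E \<and> (\<forall>E'. E' \<subseteq> A \<and> I \<subseteq> E' \<and> R E' = E' \<longrightarrow> E \<subseteq> E')"
    hence "E \<subseteq> F" using FA IF RF by simp
    moreover have "F \<subseteq> E" using lF E by simp
    ultimately show "E = F" by (rule subset_antisym)
  qed
  thus ?thesis using inv[of k] F_def by simp
qed

end
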